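(* Let $d_n$ be the number of FQ-legal index sets contained in $\{1,\dots,n\}$ (including the empty set). Let $r_1\approx1.39704$ be the largest (real) root of $r^7-r^6-r^2-1=0$ and $r_2\approx1.07378$ the modulus of the next largest roots (a complex conjugate pair; all other roots have modulus at most $1$). Then there is a constant $\beta_1>0$ such that \[ d_n=\beta_1 r_1^n\left[1+O\bigl((r_2/r_1)^n\bigr)\right]. \]
   Context: An FQ-legal index set is a finite set $S$ of positive integers such that no two elements of $S$ differ by $1$, $3$ or $4$, and $S$ does not contain both $1$ and $3$. (These are exactly the index sets of FQ-legal decompositions with respect to the Fibonacci Quilt sequence.) *)

theory Defs
  imports Complex_Main "HOL-Library.Landau_Symbols"
begin

definition FQ_legal :: "nat set \<Rightarrow> bool" where
  "FQ_legal S \<longleftrightarrow> finite S \<and> (\<forall>x\<in>S. x > 0) \<and>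
     (\<forall>x\<in>S. \<forall>y\<in>S. y - x \<notin> {1, 3, 4}) \<and> \<not> (1 \<in> S \<and> 3 \<in> S)"

definition FQ_count :: "nat \<Rightarrow> nat" where
  "FQ_count n = card {S. S \<subseteq> {1..n} \<and> FQ_legal S}"

definition FQ_poly_root :: "complex \<Rightarrow> bool" where
  "FQ_poly_root z \<longleftrightarrow> z ^ 7 - z ^ 6 - z ^ 2 - 1 = 0"

end

theory Submission
  imports Defs "HOL-Computational_Algebra.Fundamental_Theorem_Algebra"
begin


definition FQA :: "nat \<Rightarrow> nat set set" where
  "FQA m = {S. S \<subseteq> {1..m} \<and> FQ_legal S}"

lemma FQA_finite: "finite (FQA m)"
  unfolding FQA_def by (rule finite_subset[of _ "Pow {1..m}"]) auto

lemma FQ_count_FQA: "FQ_count m = card (FQA m)"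
  unfolding FQ_count_def FQA_def by simp

lemma legal_subset: "FQ_legal S \<Longrightarrow> T \<subseteq> S \<Longrightarrow> FQ_legal T"
  unfolding FQ_legal_def by (auto intro: finite_subset)

lemma legal_insert1:
  assumes "FQ_legal T" "\<forall>x\<in>T. x + 5 \<le> a" "a > 0"
  shows "FQ_legal (insert a T)"
proof -
  have f: "finite T" "\<forall>x\<in>T. x>0" "\<forall>x\<in>T.\<forall>y\<in>T. y-x \<notin> {1,3,4}" "\<not>(1\<in>T\<and>3\<in>T)"
    using assms(1) by (auto simp: FQ_legal_def)
  have d: "\<forall>x\<in>insert a T. \<forall>y\<in>insert a T. y - x \<notin> {1,3,4}"
  proof (intro ballI)
    fix x y assume xy: "x \<in> insert a T" "y \<in> insert a T"
    show "y - x \<notin> {1,3,4}"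
    proof (cases "x = a")
      case True
      then show ?thesis
      proof (cases "y = a")
        case False then have "y \<in> T" using xy by auto
        then have "y + 5 \<le> x" using assms(2) True by auto
        then show ?thesis by auto
      qed auto
    next
      case False
      then have xT: "x \<in> T" using xy by auto
      show ?thesis
      proof (cases "y = a")
        case True
        then have "x + 5 \<le> y" using assms(2) xT by auto
        then show ?thesis by auto
      next
        case False then have "y \<in> T" using xy by auto
        then show ?thesis using f(3) xT by auto
      qed
    qed
  qed
  have n13: "\<not>(1\<in>insert a T \<and> 3\<in>insert a T)"
  proof
    assume h: "1\<in>insert a T \<and> 3\<in>insert a T"
    show False
    proof (cases "a = 1 \<or> a = 3")
      case True
      then have "1 \<in> T \<or> 3 \<in> T" using h by auto
      then show False using assms(2) True by force
    next
      case False then show False using h f(4) by auto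
    qed
  qed
  show ?thesis unfolding FQ_legal_def using f(1,2) d n13 assms(3) by auto
qed

lemma legal_insert2:
  assumes "FQ_legal T" "\<forall>x\<in>T. x + 5 \<le> a" and a: "a > 3"
  shows "FQ_legal (insert a (insert (a+2) T))"
proof -
  have 1: "FQ_legal (insert (a+2) T)" using assms by (intro legal_insert1) auto
  have b3: "a \<noteq> 1" "a \<noteq> 3" using a by auto
  from 1 have f: "finite (insert (a+2) T)" "\<forall>x\<in>insert (a+2) T. x>0"
     "\<forall>x\<in>insert (a+2) T.\<forall>y\<in>insert (a+2) T. y-x \<notin> {1,3,4}"
     "\<not>(1\<in>insert (a+2) T \<and> 3\<in>insert (a+2) T)"
    by (auto simp: FQ_legal_def)
  let ?U = "insert (a+2) T"
  have d: "\<forall>x\<in>insert a ?U. \<forall>y\<in>insert a ?U. y - x \<notin> {1,3,4}"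
  proof (intro ballI)
    fix x y assume xy: "x \<in> insert a ?U" "y \<in> insert a ?U"
    have b: "z = a + 2 \<or> z + 5 \<le> a" if "z \<in> ?U" for z using that assms(2) by auto
    show "y - x \<notin> {1,3,4}"
    proof (cases "x = a")
      case True
      then show ?thesis
      proof (cases "y = a")
        case False then have "y \<in> ?U" using xy by auto
        then show ?thesis using b[of y] True by auto
      qed auto
    next
      case False
      then have xT: "x \<in> ?U" using xy by auto
      show ?thesis
      proof (cases "y = a")
        case True
        then show ?thesis using b[OF xT] by auto
      next
        case False then have "y \<in> ?U" using xy by auto
        then show ?thesis using f(3) xT by blast
      qed
    qed
  qed
  have n13: "\<not>(1\<in>insert a ?U \<and> 3\<in>insert a ?U)"
  proof
    assume h: "1\<in>insert a ?U \<and> 3\<in>insert a ?U"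
    show False
      using h f(4) b3 by auto
  qed
  show ?thesis unfolding FQ_legal_def using f(1,2) d n13 a by auto
qed

lemma FQA_split:
  "FQA (n+7) = FQA (n+6) \<union> (insert (n+7)) ` FQA (n+2)
     \<union> (\<lambda>T. insert (n+5) (insert (n+7) T)) ` FQA n"
proof (rule set_eqI, rule iffI)
  fix S assume S: "S \<in> FQA (n+7)"
  then have sub: "S \<subseteq> {1..n+7}" and L: "FQ_legal S" by (auto simp: FQA_def)
  show "S \<in> FQA (n+6) \<union> (insert (n+7)) ` FQA (n+2)
     \<union> (\<lambda>T. insert (n+5) (insert (n+7) T)) ` FQA n"
  proof (cases "n+7 \<in> S")
    case False
    have "S \<subseteq> {1..n+6}"
    proof
      fix x assume "x \<in> S"
      then have "x \<in> {1..n+7}" "x \<noteq> n+7" using sub False by auto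
      then show "x \<in> {1..n+6}" by auto
    qed
    then show ?thesis using L by (auto simp: FQA_def)
  next
    case True
    have d: "\<forall>x\<in>S. \<forall>y\<in>S. y - x \<notin> {1,3,4}" using L by (auto simp: FQ_legal_def)
    have nx: "x \<notin> {n+6, n+4, n+3}" if "x \<in> S" for x
      using d[rule_format, OF that True] by auto
    show ?thesis
    proof (cases "n+5 \<in> S")
      case False
      have "S - {n+7} \<subseteq> {1..n+2}"
      proof
        fix x assume "x \<in> S - {n+7}"
        then have x: "x \<in> S" "x \<noteq> n+7" by auto
        then have "1 \<le> x" "x \<le> n+7" using sub by auto
        moreover have "x \<noteq> n+6" "x \<noteq> n+4" "x \<noteq> n+3" using nx[OF x(1)] by auto
        moreover have "x \<noteq> n+5" using False x by auto
        ultimately show "x \<in> {1..n+2}" using x(2) by simp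
      qed
      moreover have "FQ_legal (S - {n+7})" using L by (rule legal_subset) auto
      ultimately have "S - {n+7} \<in> FQA (n+2)" by (auto simp: FQA_def)
      moreover have "S = insert (n+7) (S - {n+7})" using True by auto
      ultimately show ?thesis by blast
    next
      case True5: True
      have nx5: "x \<notin> {n+4, n+2, n+1}" if "x \<in> S" for x
        using d[rule_format, OF that True5] by auto
      have "S - {n+5, n+7} \<subseteq> {1..n}"
      proof
        fix x assume x: "x \<in> S - {n+5, n+7}"
        then have "1 \<le> x" "x \<le> n+7" using sub by auto
        moreover have "x \<noteq> n+6" "x \<noteq> n+4" "x \<noteq> n+3" using nx[of x] x by auto
        moreover have "x \<noteq> n+2" "x \<noteq> n+1" using nx5[of x] x by auto
        moreover have "x \<noteq> n+5" "x \<noteq> n+7" using x by auto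
        ultimately show "x \<in> {1..n}" by simp
      qed
      moreover have "FQ_legal (S - {n+5,n+7})" using L by (rule legal_subset) auto
      ultimately have "S - {n+5,n+7} \<in> FQA n" by (auto simp: FQA_def)
      moreover have "S = insert (n+5) (insert (n+7) (S - {n+5,n+7}))" using True True5 by auto
      ultimately show ?thesis by blast
    qed
  qed
next
  fix S assume "S \<in> FQA (n+6) \<union> (insert (n+7)) ` FQA (n+2)
     \<union> (\<lambda>T. insert (n+5) (insert (n+7) T)) ` FQA n"
  then consider "S \<in> FQA (n+6)" | T where "T \<in> FQA (n+2)" "S = insert (n+7) T"
    | T where "T \<in> FQA n" "S = insert (n+5) (insert (n+7) T)" by blast
  then show "S \<in> FQA (n+7)"
  proof cases
    case 1 then show ?thesis by (auto simp: FQA_def)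
  next
    case 2
    have "FQ_legal S" unfolding 2(2) using 2(1) by (intro legal_insert1) (auto simp: FQA_def)
    then show ?thesis using 2 by (auto simp: FQA_def)
  next
    case 3
    have "FQ_legal (insert (n+5) (insert (n+5+2) T))" using 3(1) by (intro legal_insert2) (auto simp: FQA_def)
    moreover have "n+5+2 = n+7" by simp
    ultimately have "FQ_legal S" unfolding 3(2) by metis
    then show ?thesis using 3 by (auto simp: FQA_def)
  qed
qed

lemma FQ_rec: "FQ_count (n+7) = FQ_count (n+6) + FQ_count (n+2) + FQ_count n"
proof -
  let ?B1 = "(insert (n+7)) ` FQA (n+2)"
  let ?B2 = "(\<lambda>T. insert (n+5) (insert (n+7) T)) ` FQA n"
  have i1: "inj_on (insert (n+7)) (FQA (n+2))"
  proof (rule inj_onI)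
    fix x y assume "x \<in> FQA (n+2)" "y \<in> FQA (n+2)" "insert (n+7) x = insert (n+7) y"
    moreover have "n+7 \<notin> x" "n+7 \<notin> y" using calculation(1,2) by (auto simp: FQA_def)
    ultimately show "x = y" using insert_ident by metis
  qed
  have i2: "inj_on (\<lambda>T. insert (n+5) (insert (n+7) T)) (FQA n)"
  proof (rule inj_onI)
    fix x y assume "x \<in> FQA n" "y \<in> FQA n" "insert (n+5) (insert (n+7) x) = insert (n+5) (insert (n+7) y)"
    moreover have "n+7 \<notin> x" "n+7 \<notin> y" "n+5 \<notin> x" "n+5 \<notin> y" using calculation(1,2) by (auto simp: FQA_def)
    then have "x = insert (n+5) (insert (n+7) x) - {n+5,n+7}" "y = insert (n+5) (insert (n+7) y) - {n+5,n+7}" by auto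
    then show "x = y" using calculation(3) by metis
  qed
  have c1: "card ?B1 = card (FQA (n+2))" by (rule card_image[OF i1])
  have c2: "card ?B2 = card (FQA n)" by (rule card_image[OF i2])
  have dj1: "FQA (n+6) \<inter> ?B1 = {}" by (auto simp: FQA_def)
  have h1: "\<forall>S\<in>FQA (n+6) \<union> ?B1. \<not> (n+5 \<in> S \<and> n+7 \<in> S)"
    by (fastforce simp: FQA_def subset_iff)
  have h2: "\<forall>S\<in>?B2. n+5 \<in> S \<and> n+7 \<in> S" by auto
  have dj2: "(FQA (n+6) \<union> ?B1) \<inter> ?B2 = {}" using h1 h2 by blast
  have "card (FQA (n+7)) = card (FQA (n+6) \<union> ?B1) + card ?B2"
    unfolding FQA_split by (rule card_Un_disjoint) (use dj2 FQA_finite in auto)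
  also have "card (FQA (n+6) \<union> ?B1) = card (FQA (n+6)) + card ?B1"
    by (rule card_Un_disjoint) (use dj1 FQA_finite in auto)
  finally show ?thesis unfolding FQ_count_FQA c1 c2 by simp
qed



definition Lop :: "complex poly \<Rightarrow> (nat \<Rightarrow> complex) \<Rightarrow> nat \<Rightarrow> complex" where
  "Lop q e n = (\<Sum>k\<le>degree q. coeff q k * e (n+k))"

lemma Lop_alt: "degree q < N \<Longrightarrow> Lop q e n = (\<Sum>k<N. coeff q k * e (n+k))"
  unfolding Lop_def
  by (rule sum.mono_neutral_left) (auto simp: coeff_eq_0)

lemma sum_aux: "(\<Sum>k<M. (c k::complex) * (x k - a * y k)) = (-a) * (\<Sum>k<M. c k * y k) + (\<Sum>k<M. c k * x k)"
proof -
  have "(\<Sum>k<M. c k * (x k - a * y k)) = (\<Sum>k<M. c k * x k) - (\<Sum>k<M. a * (c k * y k))"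
    by (simp add: sum_subtractf[symmetric] algebra_simps)
  also have "(\<Sum>k<M. a * (c k * y k)) = a * (\<Sum>k<M. c k * y k)" by (simp add: sum_distrib_left)
  finally show ?thesis by simp
qed

lemma Lop_lin: "Lop ([:-a,1:] * q) e n = Lop q (\<lambda>m. e (Suc m) - a * e m) n"
proof -
  let ?N = "Suc (Suc (degree q))"
  have eq: "[:-a,1:] * q = smult (-a) q + pCons 0 q" by (simp add: mult_pCons_left)
  have dg: "degree ([:-a,1:] * q) < ?N"
    using degree_mult_le[of "[:-a,1:]" q] by simp
  have "Lop ([:-a,1:] * q) e n = (\<Sum>k<?N. coeff ([:-a,1:] * q) k * e (n+k))"
    by (rule Lop_alt[OF dg])
  also have "\<dots> = (\<Sum>k<?N. (-a) * (coeff q k * e (n+k))) + (\<Sum>k<?N. coeff (pCons 0 q) k * e (n+k))"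
    unfolding eq coeff_add coeff_smult
    by (subst sum.distrib[symmetric], rule sum.cong, simp_all add: algebra_simps)
  also have "(\<Sum>k<?N. coeff (pCons 0 q) k * e (n+k)) = (\<Sum>k<Suc (degree q). coeff q k * e (n + Suc k))"
    by (subst sum.lessThan_Suc_shift) simp
  also have "(\<Sum>k<?N. (-a) * (coeff q k * e (n+k))) = (-a) * (\<Sum>k<Suc (degree q). coeff q k * e (n+k))"
  proof -
    have "(\<Sum>k<?N. coeff q k * e (n+k)) = (\<Sum>k<Suc (degree q). coeff q k * e (n+k))"
      using Lop_alt[of q "?N" e n] Lop_alt[of q "Suc (degree q)" e n] by simp
    then show ?thesis by (simp only: sum_distrib_left[symmetric])
  qed
  finally have 1: "Lop ([:-a,1:] * q) e n = (-a) * (\<Sum>k<Suc (degree q). coeff q k * e (n+k)) + (\<Sum>k<Suc (degree q). coeff q k * e (n + Suc k))" .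
  have "Lop q (\<lambda>m. e (Suc m) - a * e m) n = (\<Sum>k<Suc (degree q). coeff q k * (e (Suc (n+k)) - a * e (n+k)))"
    by (rule Lop_alt) simp
  also have "\<dots> = (-a) * (\<Sum>k<Suc (degree q). coeff q k * e (n+k)) + (\<Sum>k<Suc (degree q). coeff q k * e (n + Suc k))"
    using sum_aux[of "coeff q" "\<lambda>k. e (n + Suc k)" a "\<lambda>k. e (n+k)" "Suc (degree q)"] by simp
  finally show ?thesis using 1 by simp
qed

lemma Lop_one: "Lop 1 e n = e n"
  by (simp add: Lop_def)

lemma solve_rec:
  assumes "finite Z" "\<forall>n. Lop (\<Prod>z\<in>Z. [:-z,1:]) e n = 0"
  shows "\<exists>c. \<forall>n. e n = (\<Sum>z\<in>Z. c z * z^n)"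
  using assms
proof (induction Z arbitrary: e rule: finite_induct)
  case empty
  then show ?case by (simp add: Lop_one)
next
  case (insert a F)
  define w where "w m = e (Suc m) - a * e m" for m
  have "\<forall>n. Lop (\<Prod>z\<in>F. [:-z,1:]) w n = 0"
    using insert.prems unfolding prod.insert[OF insert.hyps] Lop_lin w_def .
  then obtain c where c: "\<And>n. w n = (\<Sum>z\<in>F. c z * z^n)" using insert.IH by blast
  define c' where "c' z = (if z = a then e 0 - (\<Sum>y\<in>F. c y / (y - a)) else c z / (z - a))" for z
  have ne: "z \<noteq> a" if "z \<in> F" for z using that insert.hyps by auto
  have main: "e n = c' a * a^n + (\<Sum>z\<in>F. c z / (z - a) * z^n)" for n
  proof (induction n)
    case 0
    then show ?case by (simp add: c'_def)
  next
    case (Suc n)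
    have "e (Suc n) = a * e n + w n" by (simp add: w_def)
    also have "\<dots> = c' a * a ^ Suc n + (\<Sum>z\<in>F. a * (c z / (z - a) * z^n) + c z * z^n)"
      using Suc c by (simp add: algebra_simps sum_distrib_left sum.distrib)
    also have "(\<Sum>z\<in>F. a * (c z / (z - a) * z^n) + c z * z^n) = (\<Sum>z\<in>F. c z / (z - a) * z^Suc n)"
    proof (rule sum.cong)
      fix z assume "z \<in> F"
      then have "z - a \<noteq> 0" using ne by auto
      then show "a * (c z / (z - a) * z^n) + c z * z^n = c z / (z - a) * z^Suc n"
        by (simp add: field_simps)
    qed simp
    finally show ?case .
  qed
  have "e n = (\<Sum>z\<in>insert a F. c' z * z^n)" for n
  proof -
    have "(\<Sum>z\<in>F. c' z * z^n) = (\<Sum>z\<in>F. c z / (z - a) * z^n)"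
      by (rule sum.cong) (auto simp: c'_def ne)
    then show ?thesis using main[of n] insert.hyps by simp
  qed
  then show ?case by blast
qed



definition pFQ :: "complex poly" where "pFQ = [:-1,0,-1,0,0,0,-1,1:]"

lemma poly_pFQ: "poly pFQ z = z^7 - z^6 - z^2 - 1"
  by (simp add: pFQ_def algebra_simps power2_eq_square power3_eq_cube eval_nat_numeral)

lemma pderiv_pFQ: "poly (pderiv pFQ) z = 7*z^6 - 6*z^5 - 2*z"
  by (simp add: pFQ_def pderiv_pCons algebra_simps eval_nat_numeral)

lemma bezout_id:
  fixes z :: complex
  shows "(-1651331 + 113140*z + 1062261*z^2 - 109238*z^3 - 741335*z^4 + 432572*z^5) * (z^7 - z^6 - z^2 - 1)
    + (-56570 + 294535*z - 1951*z^2 - 160463*z^3 + 8043*z^4 + 114733*z^5 - 61796*z^6) * (7*z^6 - 6*z^5 - 2*z) = 1651331"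
  by (simp add: algebra_simps eval_nat_numeral)

lemma rsf: "rsquarefree pFQ"
  unfolding rsquarefree_roots poly_pFQ pderiv_pFQ
  using bezout_id by (metis add_0 mult_zero_right zero_neq_numeral)

lemma Lop_pFQ: "Lop pFQ e n = e (n+7) - e (n+6) - e (n+2) - e n"
  by (simp add: Lop_def pFQ_def atMost_Suc eval_nat_numeral algebra_simps)

lemma pFQ_decomp: "pFQ = (\<Prod>z\<in>{z. poly pFQ z = 0}. [:-z,1:])"
  using complex_poly_decompose_rsquarefree[OF rsf] by (simp add: pFQ_def)

lemma roots_finite: "finite {z. poly pFQ z = 0}"
  by (rule poly_roots_finite) (simp add: pFQ_def)

lemma degree_pFQ: "degree pFQ = 7" by (simp add: pFQ_def)



lemma FQ_count_pos: "FQ_count n \<ge> 1"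
proof -
  have "{} \<in> FQA n" by (simp add: FQA_def FQ_legal_def)
  then have "card (FQA n) > 0" using FQA_finite by (auto simp: card_gt_0_iff)
  then show ?thesis by (simp add: FQ_count_FQA)
qed

theorem mainTheorem11:
  fixes r1 r2 :: real
  assumes "FQ_poly_root (complex_of_real r1)"
    and "\<forall>x::real. FQ_poly_root (complex_of_real x) \<longrightarrow> x \<le> r1"
    and "r2 = Max {cmod z | z. FQ_poly_root z \<and> z \<noteq> complex_of_real r1}"
  shows "\<exists>\<beta>1::real. \<beta>1 > 0 \<and>
    (\<lambda>n. real (FQ_count n) / (\<beta>1 * r1 ^ n) - 1) \<in> O(\<lambda>n. (r2 / r1) ^ n)"
proof -
  define d where "d n = real (FQ_count n)" for n
  define e where "e n = complex_of_real (d n)" for n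
  have rec: "d (n+7) = d (n+6) + d (n+2) + d n" for n
    using FQ_rec[of n] unfolding d_def by simp
  define Z where "Z = {z. poly pFQ z = 0}"
  have rootiff: "FQ_poly_root z \<longleftrightarrow> z \<in> Z" for z
    by (simp add: Z_def FQ_poly_root_def poly_pFQ)
  have fZ: "finite Z" using roots_finite by (simp add: Z_def)
  have "\<forall>n. Lop (\<Prod>z\<in>Z. [:-z,1:]) e n = 0"
  proof
    fix n
    have "Lop pFQ e n = of_real (d (n+7) - d (n+6) - d (n+2) - d n)"
      unfolding Lop_pFQ e_def by simp
    also have "\<dots> = 0" using rec[of n] by simp
    finally show "Lop (\<Prod>z\<in>Z. [:-z,1:]) e n = 0" using pFQ_decomp by (simp add: Z_def)
  qed
  then obtain c where c: "\<And>n. e n = (\<Sum>z\<in>Z. c z * z^n)" using solve_rec[OF fZ] by blast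
  define f where "f x = x^7 - x^6 - x^2 - 1" for x :: real
  have froot: "FQ_poly_root (complex_of_real x) \<longleftrightarrow> f x = 0" for x
  proof -
    have "(complex_of_real x)^7 - (complex_of_real x)^6 - (complex_of_real x)^2 - 1 = complex_of_real (f x)"
      by (simp add: f_def)
    then show ?thesis unfolding FQ_poly_root_def by simp
  qed
  have fr1: "f r1 = 0" using assms(1) froot by simp
  have r1gt1: "r1 > 1"
  proof (rule ccontr)
    assume "\<not> r1 > 1"
    then have "r1^6 * (r1 - 1) \<le> 0" by (simp add: mult_nonneg_nonpos)
    moreover have "f r1 = r1^6 * (r1 - 1) - r1^2 - 1" by (simp add: f_def algebra_simps eval_nat_numeral)
    moreover have "r1^2 \<ge> 0" by simp
    ultimately have "f r1 < 0" by linarith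
    then show False using fr1 by simp
  qed
  have fpos: "f R > 0" if R: "R > r1" for R
  proof (rule ccontr)
    assume "\<not> f R > 0"
    then have fR: "f R \<le> 0" by simp
    have R1: "R > 1" using R r1gt1 by simp
    have "f (R+2) > 0"
    proof -
      define T where "T = R + 2"
      have g: "T \<ge> 2" using R1 by (simp add: T_def)
      have a1: "T^6 * (T - 1) \<ge> T^6" using g mult_left_mono[of 1 "T - 1" "T^6"] by simp
      have a2: "T^6 = T^2 * T^4" by (simp add: power_add[symmetric])
      have a3: "T^4 \<ge> 2^4" using g by (intro power_mono) auto
      have a4: "T^2 * T^4 \<ge> 16 * T^2" using a3 mult_left_mono[of "2^4" "T^4" "T^2"] by (simp add: mult.commute)
      have a5: "f T = T^6 * (T - 1) - T^2 - 1" by (simp add: f_def algebra_simps eval_nat_numeral)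
      have a6: "T^2 \<ge> 2^2" using g by (intro power_mono) auto
      then have a6': "T^2 \<ge> 4" by simp
      have "f T > 0" using a1 a2 a4 a5 a6' by linarith
      then show ?thesis by (simp add: T_def)
    qed
    have "continuous_on {R..R+2} f" unfolding f_def by (intro continuous_intros)
    then obtain x where x: "R \<le> x" "x \<le> R+2" "f x = 0"
      using IVT'[of f R 0 "R+2"] fR \<open>f (R+2) > 0\<close> by auto
    then have "x \<le> r1" using assms(2) froot by auto
    then show False using x R by simp
  qed
  have rootbound: "cmod z < r1" if z: "z \<in> Z" "z \<noteq> complex_of_real r1" for z
  proof -
    let ?R = "cmod z"
    have pz: "z^7 - z^6 - z^2 - 1 = 0" using z rootiff[of z] by (simp add: FQ_poly_root_def)
    then have eq: "z^6 * (z - 1) = z^2 + 1" by (simp add: algebra_simps eval_nat_numeral)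
    have "?R^6 * cmod (z - 1) = cmod (z^2 + 1)"
      using arg_cong[OF eq, of cmod] by (simp add: norm_mult norm_power)
    also have "\<dots> \<le> ?R^2 + 1" using norm_triangle_ineq[of "z^2" 1] by (simp add: norm_power)
    finally have A: "?R^6 * cmod (z - 1) \<le> ?R^2 + 1" .
    have B: "?R - 1 \<le> cmod (z - 1)" using norm_triangle_ineq2[of z 1] by simp
    have C: "?R^6 * (?R - 1) \<le> ?R^6 * cmod (z - 1)" using B by (intro mult_left_mono) auto
    have fR: "f ?R \<le> 0" using A C by (simp add: f_def algebra_simps eval_nat_numeral)
    have le: "?R \<le> r1"
    proof (rule ccontr)
      assume "\<not> ?R \<le> r1"
      then have "f ?R > 0" using fpos by simp
      then show False using fR by simp
    qed
    show ?thesis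
    proof (rule ccontr)
      assume "\<not> ?R < r1"
      then have Req: "?R = r1" using le by simp
      then have "f ?R = 0" using fr1 by simp
      then have "?R^6 * (?R - 1) = ?R^2 + 1" by (simp add: f_def algebra_simps eval_nat_numeral)
      then have "?R^6 * cmod (z - 1) \<le> ?R^6 * (?R - 1)" using A by simp
      moreover have "?R^6 > 0" using Req r1gt1 by simp
      ultimately have "cmod (z - 1) \<le> ?R - 1" by simp
      then have n1: "cmod (z - 1) = ?R - 1" using B by simp
      have sq: "(a - 1)^2 = a^2 - 2*a + 1" for a :: real by (simp add: power2_diff)
      have e0: "(cmod (z - 1))^2 = (?R - 1)^2" using n1 by simp
      have e1: "(cmod (z - 1))^2 = (Re z - 1)^2 + (Im z)^2" using cmod_power2[of "z - 1"] by simp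
      have e2: "?R^2 = (Re z)^2 + (Im z)^2" by (rule cmod_power2)
      have ReR: "Re z = ?R" using e0 e1 e2 sq[of "Re z"] sq[of "?R"] by linarith
      then have "(Im z)^2 = 0" using e2 by (simp add: power2_eq_square)
      then have "Im z = 0" by simp
      then have "z = complex_of_real (Re z)" by (simp add: complex_eq_iff)
      then have "z = complex_of_real r1" using ReR Req by simp
      then show False using z(2) by simp
    qed
  qed
  have r1Z: "complex_of_real r1 \<in> Z" using assms(1) rootiff by simp
  define Z' where "Z' = Z - {complex_of_real r1}"
  have fZ': "finite Z'" using fZ by (simp add: Z'_def)
  have r2_eq: "r2 = Max (cmod ` Z')"
    unfolding assms(3) Z'_def by (rule arg_cong[where f=Max]) (auto simp: rootiff)
  have Z'ne: "Z' \<noteq> {}"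
  proof
    assume "Z' = {}"
    then have "Z = {complex_of_real r1}" using r1Z by (auto simp: Z'_def)
    then have pe: "pFQ = [:- complex_of_real r1, 1:]" using pFQ_decomp by (simp add: Z_def)
    have "degree pFQ = 1" unfolding pe by simp
    then show False using degree_pFQ by simp
  qed
  have r2ge: "cmod z \<le> r2" if "z \<in> Z'" for z
    unfolding r2_eq using fZ' that by (intro Max_ge) auto
  have "r2 \<in> cmod ` Z'" unfolding r2_eq using fZ' Z'ne by (intro Max_in) auto
  then obtain z0 where z0: "z0 \<in> Z'" "r2 = cmod z0" by auto
  have r2lt: "r2 < r1" using z0 rootbound by (auto simp: Z'_def)
  have r2nn: "0 \<le> r2" using z0 by simp
  define \<beta> where "\<beta> = Re (c (complex_of_real r1))"
  define C where "C = (\<Sum>z\<in>Z'. cmod (c z))"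
  have Cnn: "C \<ge> 0" unfolding C_def by (intro sum_nonneg) auto
  have err: "\<bar>d n - \<beta> * r1^n\<bar> \<le> C * r2^n" for n
  proof -
    have en: "e n = c (complex_of_real r1) * (complex_of_real r1)^n + (\<Sum>z\<in>Z'. c z * z^n)"
      unfolding c Z'_def using fZ r1Z by (simp add: sum.remove)
    have "d n - \<beta> * r1^n = Re (\<Sum>z\<in>Z'. c z * z^n)"
      using arg_cong[OF en, of Re] unfolding e_def \<beta>_def by (simp flip: of_real_power)
    then have "\<bar>d n - \<beta> * r1^n\<bar> \<le> cmod (\<Sum>z\<in>Z'. c z * z^n)"
      using abs_Re_le_cmod[of "\<Sum>z\<in>Z'. c z * z^n"] by (simp only:)
    also have "\<dots> \<le> (\<Sum>z\<in>Z'. cmod (c z) * cmod z ^ n)"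
      using norm_sum[of "\<lambda>z. c z * z^n" Z'] by (simp add: norm_mult norm_power)
    also have "\<dots> \<le> (\<Sum>z\<in>Z'. cmod (c z) * r2 ^ n)"
      using r2ge by (intro sum_mono mult_left_mono power_mono) auto
    also have "\<dots> = C * r2^n" by (simp add: C_def sum_distrib_right)
    finally show ?thesis .
  qed
  define m where "m = 1 / r1^7"
  have mpos: "m > 0" using r1gt1 by (simp add: m_def)
  have r17: "r1^7 = r1^6 + r1^2 + 1" using fr1 by (simp add: f_def)
  have lower: "d n \<ge> m * r1^n" for n
  proof (induction n rule: less_induct)
    case (less n)
    show ?case
    proof (cases "n < 7")
      case True
      have "r1^n \<le> r1^7" using True r1gt1 by (intro power_increasing) auto
      then have "m * r1^n \<le> 1" using r1gt1 by (simp add: m_def)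
      moreover have "d n \<ge> 1" using FQ_count_pos[of n] by (simp add: d_def)
      ultimately show ?thesis by simp
    next
      case False
      then obtain k where k: "n = k + 7" by (metis add.commute le_add_diff_inverse not_less)
      have s1: "d n = d (k+6) + d (k+2) + d k" using rec[of k] k by simp
      have s2: "d (k+6) + d (k+2) + d k \<ge> m * r1^(k+6) + m * r1^(k+2) + m * r1^k"
      proof -
        have "k+6 < n" "k+2 < n" "k < n" using k by auto
        then show ?thesis using less.IH[of "k+6"] less.IH[of "k+2"] less.IH[of k] by linarith
      qed
      have s3: "m * r1^(k+6) + m * r1^(k+2) + m * r1^k = m * r1^k * (r1^6 + r1^2 + 1)"
        by (simp add: power_add algebra_simps power2_eq_square)
      from s1 s2 s3 have "d n \<ge> m * r1^k * (r1^6 + r1^2 + 1)" by linarith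
      also have "m * r1^k * (r1^6 + r1^2 + 1) = m * r1^n" unfolding r17[symmetric] k by (simp add: power_add)
      finally show ?thesis .
    qed
  qed
  have q: "r2 / r1 < 1" "0 \<le> r2 / r1" using r2lt r1gt1 r2nn by auto
  obtain N where N: "(r2/r1)^N < m / (2 * (C + 1))"
    using real_arch_pow_inv[of "m / (2 * (C + 1))" "r2/r1"] mpos Cnn q by auto
  have bpos: "\<beta> > 0"
  proof -
    have r1N: "r1^N > 0" using r1gt1 by simp
    have "C * (r2/r1)^N \<le> (C + 1) * (r2/r1)^N" using q by (intro mult_right_mono) auto
    also have "\<dots> < (C+1) * (m / (2 * (C + 1)))" using N Cnn by (intro mult_strict_left_mono) auto
    also have "\<dots> = m / 2" using Cnn by (simp add: field_simps)
    finally have "C * (r2/r1)^N < m/2" .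
    then have "C * (r2/r1)^N * r1^N < m/2 * r1^N" using r1N by (intro mult_strict_right_mono)
    then have X: "C * r2^N < m/2 * r1^N" using r1gt1 by (simp add: power_divide)
    have "\<beta> * r1^N \<ge> m * r1^N - C * r2^N" using err[of N] lower[of N] by linarith
    then have "\<beta> * r1^N > m/2 * r1^N" using X by linarith
    then have "\<beta> > m/2" using r1N by simp
    then show ?thesis using mpos by simp
  qed
  have "(\<lambda>n. d n / (\<beta> * r1 ^ n) - 1) \<in> O(\<lambda>n. (r2 / r1) ^ n)"
  proof (rule bigoI[where c = "C / \<beta>"], rule always_eventually, rule allI)
    fix n
    have pos: "\<beta> * r1^n > 0" using bpos r1gt1 by simp
    have "d n / (\<beta> * r1 ^ n) - 1 = (d n - \<beta> * r1^n) / (\<beta> * r1^n)" using pos bpos r1gt1 by (simp add: diff_divide_distrib)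
    then have "norm (d n / (\<beta> * r1 ^ n) - 1) = \<bar>d n - \<beta> * r1^n\<bar> / (\<beta> * r1^n)" using pos by simp
    also have "\<dots> \<le> C * r2^n / (\<beta> * r1^n)" using err[of n] pos by (intro divide_right_mono) auto
    also have "\<dots> = C / \<beta> * norm ((r2/r1)^n)" using q r1gt1 bpos by (simp add: power_divide field_simps)
    finally show "norm (d n / (\<beta> * r1 ^ n) - 1) \<le> C / \<beta> * norm ((r2/r1)^n)" .
  qed
  then show ?thesis using bpos unfolding d_def by blast
qed


end
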